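(* Let $k\ge1$ be an integer, let $I=\{e^{i\theta}: -\pi/2\leq\theta\leq\pi/2\}$, and for $a>1$ consider the polynomials $u_n(z)=(z-a)^n$, $n\ge1$, and $f_n=u_n/\|u_n\|_{k,2}$ (so $\|f_n\|_{k,2}=1$). Then $\|f_n\|_{2,I}\to0$ as $n\to\infty$, the limit $$\beta_{k,a}:=\lim_{n\to\infty}\|f_n\|_2\left(\log(1/\|f_n\|_{2,I})\right)^k$$ exists and satisfies $\beta_{k,a}>0$, and $\beta_{k,a}\to1$ as $a\to\infty$.
   Context: $\mathbb D$ is the open unit disk and $\mathbb T$ the unit circle. For $f$ analytic in a neighbourhood of $\overline{\mathbb D}$, $\|f\|_2=\left(\frac{1}{2\pi}\int_0^{2\pi}|f(e^{i\theta})|^2d\theta\right)^{1/2}$, and $\|f\|_{k,2}^2=\sum_{j=0}^k\|f^{(j)}\|_2^2$ (derivatives with respect to $z$). For a subarc $I\subset\mathbb T$ of length $2\pi\lambda$, $\|f\|_{2,I}=\left(\frac{1}{2\pi\lambda}\int_I|f(e^{i\theta})|^2d\theta\right)^{1/2}$; here $\lambda=1/2$. *)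

theory Defs
  imports "HOL-Analysis.Analysis"
begin

definition circ_norm :: "(complex \<Rightarrow> complex) \<Rightarrow> real" where
  "circ_norm f = sqrt (integral {0..2*pi} (\<lambda>t. (cmod (f (cis t)))^2) / (2*pi))"

definition sob_norm :: "nat \<Rightarrow> (complex \<Rightarrow> complex) \<Rightarrow> real" where
  "sob_norm k f = sqrt (\<Sum>j\<le>k. (circ_norm ((deriv ^^ j) f))^2)"

text \<open>Normalised L2 norm on the arc I = {e^{it} : -pi/2 <= t <= pi/2}, length 2 pi lambda, lambda = 1/2.\<close>
definition arc_norm :: "(complex \<Rightarrow> complex) \<Rightarrow> real" where
  "arc_norm f = sqrt (integral {-pi/2..pi/2} (\<lambda>t. (cmod (f (cis t)))^2) / pi)"

definition u_poly :: "real \<Rightarrow> nat \<Rightarrow> complex \<Rightarrow> complex" where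
  "u_poly a n = (\<lambda>z. (z - complex_of_real a) ^ n)"

definition f_norm :: "nat \<Rightarrow> real \<Rightarrow> nat \<Rightarrow> complex \<Rightarrow> complex" where
  "f_norm k a n = (\<lambda>z. u_poly a n z / complex_of_real (sob_norm k (u_poly a n)))"

definition beta_seq :: "nat \<Rightarrow> real \<Rightarrow> nat \<Rightarrow> real" where
  "beta_seq k a n = circ_norm (f_norm k a n) * (ln (1 / arc_norm (f_norm k a n))) ^ k"

end

theory Submission
  imports Defs
begin


definition w :: "real \<Rightarrow> real \<Rightarrow> real" where
  "w a t = (cmod (cis t - complex_of_real a))^2"

lemma w_eq: "w a t = 1 + a^2 - 2*a*cos t"
proof -
  have "w a t = (cos t - a)^2 + (sin t)^2"
    unfolding w_def cmod_def by (simp add: cis.code)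
  also have "\<dots> = 1 + a^2 - 2*a*cos t"
    using sin_cos_squared_add[of t] by (simp add: power2_eq_square algebra_simps)
  finally show ?thesis .
qed

lemma w_nonneg: "0 \<le> w a t" unfolding w_def by simp

lemma w_cont: "continuous_on S (w a)"
proof -
  have "w a = (\<lambda>t. 1 + a^2 - 2*a*cos t)" using w_eq by auto
  then show ?thesis by (simp add: continuous_intros)
qed

lemma w_pow_integrable: "(\<lambda>t. w a t ^ m) integrable_on {x..y}"
  by (intro integrable_continuous_interval continuous_intros w_cont)

lemma cos_lower: "cos (x::real) \<ge> 1 - x^2/2"
proof -
  have "cos x = 1 - 2 * sin (x/2) ^ 2" using cos_double_sin[of "x/2"] by simp
  moreover have "sin (x/2)^2 \<le> (x/2)^2"
    using abs_sin_x_le_abs_x[of "x/2"] by (metis abs_ge_zero power2_abs power_mono)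
  ultimately show ?thesis by (simp add: power_divide)
qed

definition P :: "nat \<Rightarrow> nat \<Rightarrow> nat" where
  "P n j = (\<Prod>i<j. n - i)"

definition Mi :: "real \<Rightarrow> nat \<Rightarrow> real" where
  "Mi a m = integral {0..2*pi} (\<lambda>t. w a t ^ m)"

definition Ai :: "real \<Rightarrow> nat \<Rightarrow> real" where
  "Ai a m = integral {-pi/2..pi/2} (\<lambda>t. w a t ^ m)"

lemma deriv_poly_aux:
  "deriv (\<lambda>z. c * (z - b)^m) = (\<lambda>z. c * of_nat m * (z - b)^(m - 1))" for c b :: complex
proof
  fix z :: complex
  have "((\<lambda>z. c * (z - b)^m) has_field_derivative c * (of_nat m * (z - b)^(m - 1))) (at z)"
    by (auto intro!: derivative_eq_intros)
  then show "deriv (\<lambda>z. c * (z - b)^m) z = c * of_nat m * (z - b)^(m - 1)"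
    by (simp add: DERIV_imp_deriv mult.assoc)
qed

lemma deriv_u: "(deriv ^^ j) (u_poly a n) = (\<lambda>z. of_nat (P n j) * (z - of_real a)^(n-j))"
proof (induction j)
  case 0
  then show ?case by (simp add: P_def u_poly_def)
next
  case (Suc j)
  have "(deriv ^^ Suc j) (u_poly a n) = deriv ((deriv ^^ j) (u_poly a n))" by simp
  also have "\<dots> = (\<lambda>z. of_nat (P n j) * of_nat (n - j) * (z - of_real a)^(n - j - 1))"
    unfolding Suc deriv_poly_aux ..
  also have "\<dots> = (\<lambda>z. of_nat (P n (Suc j)) * (z - of_real a)^(n - Suc j))"
    by (simp add: P_def)
  finally show ?case .
qed

lemma circ_norm_mono:
  "circ_norm (\<lambda>z. of_nat p * (z - of_real a)^m) = sqrt (real p ^ 2 * Mi a m / (2*pi))"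
proof -
  have "\<And>t. (cmod (of_nat p * (cis t - of_real a)^m))^2 = real p ^ 2 * w a t ^ m"
  proof -
    fix t
    have "(cmod (of_nat p * (cis t - of_real a)^m))^2 = (real p * cmod (cis t - of_real a)^m)^2"
      by (simp add: norm_mult norm_power)
    also have "\<dots> = real p ^ 2 * ((cmod (cis t - of_real a))^2)^m"
      by (simp add: power_mult_distrib flip: power_mult) (simp add: mult.commute)
    finally show "(cmod (of_nat p * (cis t - of_real a)^m))^2 = real p ^ 2 * w a t ^ m"
      by (simp add: w_def)
  qed
  then show ?thesis unfolding circ_norm_def Mi_def by simp
qed

definition S :: "real \<Rightarrow> nat \<Rightarrow> nat \<Rightarrow> real" where
  "S a k n = (\<Sum>j\<le>k. real (P n j) ^ 2 * Mi a (n - j) / (2*pi))"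

lemma w_ge: "w a t \<ge> (a - 1)^2" if "a \<ge> 0"
  using that cos_le_one[of t] unfolding w_eq
  by (simp add: power2_eq_square algebra_simps mult_left_le)

lemma cmod_pow_sq: "(cmod ((cis t - of_real a)^n))^2 = w a t ^ n"
  by (simp add: w_def norm_power flip: power_mult) (simp add: mult.commute power_mult)

lemma Mi_ge: "Mi a m \<ge> 2*pi*(a-1)^(2*m)" if "a \<ge> 0"
proof -
  have "integral {0..2*pi} (\<lambda>t. ((a-1)^2)^m) \<le> Mi a m"
    unfolding Mi_def
    by (rule integral_le) (auto intro!: w_pow_integrable power_mono w_ge that)
  then show ?thesis by (simp add: power_mult)
qed

lemma Ai_ge: "Ai a m \<ge> pi*(a-1)^(2*m)" if "a \<ge> 0"
proof -
  have "integral {-pi/2..pi/2} (\<lambda>t. ((a-1)^2)^m) \<le> Ai a m"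
    unfolding Ai_def
    by (rule integral_le) (auto intro!: w_pow_integrable power_mono w_ge that)
  then show ?thesis by (simp add: power_mult)
qed

lemma Mi_pos: "Mi a m > 0" if "a > 1"
proof -
  have "2*pi*(a-1)^(2*m) > 0" using that by simp
  then show ?thesis using Mi_ge[of a m] that by linarith
qed

lemma Ai_pos: "Ai a m > 0" if "a > 1"
proof -
  have "pi*(a-1)^(2*m) > 0" using that by simp
  then show ?thesis using Ai_ge[of a m] that by linarith
qed

lemma Mi_nonneg: "Mi a m \<ge> 0"
  unfolding Mi_def by (rule integral_nonneg) (auto intro!: w_pow_integrable zero_le_power w_nonneg)

lemma sob_u: "sob_norm k (u_poly a n) = sqrt (S a k n)"
  unfolding sob_norm_def S_def deriv_u circ_norm_mono
  by (intro arg_cong[where f=sqrt] sum.cong refl real_sqrt_pow2) (simp add: Mi_nonneg)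

lemma S_pos: "S a k n > 0" if "a > 1"
proof -
  have "S a k n = real (P n 0)^2 * Mi a (n - 0) / (2*pi) + (\<Sum>j\<in>{..k}-{0}. real (P n j) ^ 2 * Mi a (n - j) / (2*pi))"
    unfolding S_def by (subst sum.remove[of _ 0]) auto
  moreover have "(\<Sum>j\<in>{..k}-{0}. real (P n j) ^ 2 * Mi a (n - j) / (2*pi)) \<ge> 0"
    by (intro sum_nonneg) (simp add: Mi_nonneg)
  moreover have "real (P n 0)^2 * Mi a (n - 0) / (2*pi) > 0" using Mi_pos[OF that] by (simp add: P_def)
  ultimately show ?thesis by linarith
qed

lemma cmod_f_sq: "(cmod (f_norm k a n (cis t)))^2 = w a t ^ n / S a k n" if "a > 1"
proof -
  have "(cmod (f_norm k a n (cis t)))^2 = (cmod ((cis t - of_real a)^n))^2 / (sqrt (S a k n))^2"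
    unfolding f_norm_def sob_u unfolding u_poly_def by (simp add: norm_divide power_divide)
  also have "\<dots> = w a t ^ n / S a k n" using S_pos[OF that, of k n] cmod_pow_sq[of t a n] by simp
  finally show ?thesis .
qed

lemma circ_f: "circ_norm (f_norm k a n) = sqrt (Mi a n / (2*pi) / S a k n)" if "a > 1"
  unfolding circ_norm_def cmod_f_sq[OF that] Mi_def by simp

lemma arc_f: "arc_norm (f_norm k a n) = sqrt (Ai a n / pi / S a k n)" if "a > 1"
  unfolding arc_norm_def cmod_f_sq[OF that] Ai_def by simp

lemma div_le_self_real: "0 \<le> (x::real) \<Longrightarrow> 1 \<le> y \<Longrightarrow> x / y \<le> x"
  using mult_left_mono[of 1 y x] by (simp add: divide_le_eq)

lemma int_lower:
  assumes "c \<le> d" "0 \<le> b" "\<And>t. t \<in> {c..d} \<Longrightarrow> b \<le> w a t" "{c..d} \<subseteq> {x..y}"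
  shows "(d - c) * b ^ m \<le> integral {x..y} (\<lambda>t. w a t ^ m)"
proof -
  have "integral {c..d} (\<lambda>t. b ^ m) \<le> integral {c..d} (\<lambda>t. w a t ^ m)"
    by (rule integral_le) (auto intro!: w_pow_integrable power_mono assms)
  also have "\<dots> \<le> integral {x..y} (\<lambda>t. w a t ^ m)"
    by (rule integral_subset_le[OF assms(4)]) (auto intro!: w_pow_integrable zero_le_power w_nonneg)
  finally show ?thesis using assms(1) by (simp add: content_real)
qed

context
  fixes a :: real
  assumes a1: "a > 1"
begin

lemma w_le_W: "w a t \<le> (a+1)^2"
proof -
  have "0 \<le> 2*a*(1 + cos t)" using a1 cos_ge_minus_one[of t] by (intro mult_nonneg_nonneg) linarith+
  then show ?thesis unfolding w_eq by (simp add: power2_eq_square algebra_simps)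
qed

lemma w_le_V: "w a t \<le> 1 + a^2" if "t \<in> {-pi/2..pi/2}"
  using a1 cos_ge_zero[of t] that unfolding w_eq by simp

lemma Mi_le: "Mi a m \<le> 2*pi*((a+1)^2)^m"
proof -
  have "Mi a m \<le> integral {0..2*pi} (\<lambda>t. ((a+1)^2)^m)"
    unfolding Mi_def
    by (rule integral_le) (auto intro!: w_pow_integrable power_mono w_le_W w_nonneg)
  then show ?thesis by simp
qed

lemma Ai_le: "Ai a m \<le> pi*(1+a^2)^m"
proof -
  have "Ai a m \<le> integral {-pi/2..pi/2} (\<lambda>t. (1+a^2)^m)"
    unfolding Ai_def
    by (rule integral_le) (auto intro!: w_pow_integrable power_mono w_le_V w_nonneg)
  then show ?thesis by simp
qed

lemma Mi_suc_le: "Mi a (Suc m) \<le> (a+1)^2 * Mi a m"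
proof -
  have "Mi a (Suc m) \<le> integral {0..2*pi} (\<lambda>t. (a+1)^2 * w a t ^ m)"
    unfolding Mi_def
    using w_pow_integrable[of a "Suc m"]
    by (intro integral_le) (auto intro!: w_pow_integrable integrable_cmul[where 'b=real, simplified] mult_right_mono w_le_W w_nonneg zero_le_power)
  then show ?thesis unfolding Mi_def by simp
qed

lemma Mi_suc_ge:
  assumes "0 \<le> q"
  shows "Mi a (Suc m) \<ge> q * Mi a m - 2*pi*q^(Suc m)"
proof -
  have pt: "q * w a t ^ m - q ^ Suc m \<le> w a t ^ Suc m" for t
  proof (cases "w a t \<ge> q")
    case True
    then have "q * w a t ^ m \<le> w a t * w a t ^ m"
      by (intro mult_right_mono) (auto simp: w_nonneg)
    moreover have "0 \<le> q * q^m" using assms by simp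
    ultimately show ?thesis by simp
  next
    case False
    then have "w a t ^ m \<le> q ^ m" by (intro power_mono) (auto simp: w_nonneg)
    then have "q * w a t ^ m \<le> q * q^m" using assms by (rule mult_left_mono)
    moreover have "0 \<le> w a t ^ Suc m" by (simp add: w_nonneg)
    ultimately show ?thesis by simp
  qed
  have "integral {0..2*pi} (\<lambda>t. q * w a t ^ m - q ^ Suc m) \<le> Mi a (Suc m)"
    unfolding Mi_def
    using w_pow_integrable[of a "Suc m"] pt
    by (intro integral_le) (auto intro!: w_pow_integrable integrable_diff integrable_cmul[where 'b=real, simplified])
  moreover have "integral {0..2*pi} (\<lambda>t. q * w a t ^ m - q ^ Suc m) = q * Mi a m - 2*pi*q^(Suc m)"
    unfolding Mi_def
    by (subst integral_diff) (auto intro!: w_pow_integrable integrable_cmul[where 'b=real, simplified])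
  ultimately show ?thesis by simp
qed

lemma Mi_lower: "Mi a m \<ge> (3/4) * ((a+1)^2)^m / m" if "m \<ge> 1"
proof -
  define W where "W = (a+1)^2"
  have Wpos: "W > 0" "a / W \<le> 1/4"
  proof -
    show "W > 0" using a1 unfolding W_def by simp
    have "4*a \<le> W" unfolding W_def using zero_le_power2[of "a-1"] by (simp add: power2_eq_square algebra_simps)
    then show "a / W \<le> 1/4" using \<open>W > 0\<close> by (simp add: field_simps)
  qed
  have mpos: "real m \<ge> 1" using that by simp
  have b0: "0 \<le> W - a / (real m)^2"
  proof -
    have "a / (real m)^2 \<le> a" using a1 mpos by (intro div_le_self_real) auto
    moreover have "a \<le> W" using Wpos a1 by (simp add: field_simps)
    ultimately show ?thesis by simp
  qed
  have wb: "W - a / (real m)^2 \<le> w a t" if "t \<in> {pi - 1/m..pi}" for t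
  proof -
    have x0: "0 \<le> pi - t" "pi - t \<le> 1/m" using that by auto
    have "(pi - t)^2 \<le> (1/m)^2" using x0 by (intro power_mono) auto
    then have "cos (pi - t) \<ge> 1 - 1/(2*(real m)^2)"
      using cos_lower[of "pi - t"] by (simp add: power_divide)
    then have "cos t \<le> -1 + 1/(2*(real m)^2)"
      using cos_pi_minus[of t] by simp
    then have "2*a*cos t \<le> 2*a*(-1 + 1/(2*(real m)^2))" using a1 by (intro mult_left_mono) auto
    moreover have "2*a*(-1 + 1/(2*(real m)^2)) = -2*a + a/(real m)^2" by (simp add: field_simps)
    moreover have "W = a^2 + 2*a + 1" unfolding W_def by (simp add: power2_eq_square algebra_simps)
    ultimately show ?thesis unfolding w_eq by linarith
  qed
  have "(pi - (pi - 1/m)) * (W - a/(real m)^2)^m \<le> Mi a m"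
    unfolding Mi_def
  proof (rule int_lower)
    have "1/real m \<le> 1" using mpos by simp
    then show "{pi - 1/real m..pi} \<subseteq> {0..2*pi}" using pi_ge_two by auto
  qed (use b0 wb in auto)
  moreover have "W^m * (3/4) \<le> (W - a/(real m)^2)^m"
  proof -
    have y0: "0 \<le> a/W" using a1 Wpos by simp
    have m2: "1 \<le> real m ^ 2" using mpos by simp
    have "(a/W)/(real m)^2 \<le> a/W" by (rule div_le_self_real[OF y0 m2])
    then have h1: "-1 \<le> -((a/W)/(real m)^2)" using Wpos(2) by linarith
    have B: "1 + of_nat m * (-((a/W)/(real m)^2)) \<le> (1 + -((a/W)/(real m)^2))^m"
      by (rule Bernoulli_inequality[OF h1])
    have e: "of_nat m * (-((a/W)/(real m)^2)) = -((a/W)/m)"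
      using mpos by (simp add: power2_eq_square)
    have "(a/W)/m \<le> a/W" by (rule div_le_self_real[OF y0 mpos])
    moreover have B': "1 - (a/W)/m \<le> (1 - (a/W)/(real m)^2)^m" using B e by simp
    ultimately have "3/4 \<le> (1 - (a/W)/(real m)^2)^m" using Wpos(2) by linarith
    then have "W^m * (3/4) \<le> W^m * (1 - (a/W)/(real m)^2)^m"
      using Wpos(1) by (intro mult_left_mono) auto
    also have "\<dots> = (W * (1 - (a/W)/(real m)^2))^m" by (simp add: power_mult_distrib)
    also have "W * (1 - (a/W)/(real m)^2) = W - a/(real m)^2" using Wpos(1) by (simp add: right_diff_distrib)
    finally show ?thesis .
  qed
  ultimately have "(1/real m) * (W^m * (3/4)) \<le> Mi a m"
    using mpos by (smt (verit) divide_nonneg_nonneg mult_left_mono)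
  then show ?thesis unfolding W_def[symmetric] by simp
qed


lemma Ai_lower: "Ai a m \<ge> ((a-1)^2/(1+a^2)) * (1+a^2)^m / m" if "m \<ge> 1"
proof -
  define V where "V = 1 + a^2"
  have Vpos: "V > 0" "2*a / V \<le> 1" "0 \<le> 2*a/V"
  proof -
    show "V > 0" unfolding V_def by (simp add: add_pos_nonneg)
    have "2*a \<le> V" unfolding V_def using zero_le_power2[of "a-1"] by (simp add: power2_eq_square algebra_simps)
    then show "2*a / V \<le> 1" using \<open>V > 0\<close> by simp
    show "0 \<le> 2*a/V" using a1 \<open>V > 0\<close> by simp
  qed
  have mpos: "real m \<ge> 1" using that by simp
  have b0: "0 \<le> V - 2*a / real m"
  proof -
    have "2*a / real m \<le> 2*a" using a1 mpos by (intro div_le_self_real) auto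
    moreover have "2*a \<le> V" using Vpos by (simp add: field_simps)
    ultimately show ?thesis by simp
  qed
  have wb: "V - 2*a / real m \<le> w a t" if "t \<in> {pi/2 - 1/real m..pi/2}" for t
  proof -
    have x0: "0 \<le> pi/2 - t" "pi/2 - t \<le> 1/real m" using that by auto
    have "cos t = sin (pi/2 - t)" by (simp add: cos_sin_eq)
    also have "\<dots> \<le> pi/2 - t" using sin_x_le_x[OF x0(1)] .
    finally have "cos t \<le> 1 / real m" using x0 by linarith
    then have "2*a*cos t \<le> 2*a*(1/real m)" using a1 by (intro mult_left_mono) auto
    then show ?thesis unfolding w_eq V_def by simp
  qed
  have "(pi/2 - (pi/2 - 1/real m)) * (V - 2*a/real m)^m \<le> Ai a m"
    unfolding Ai_def
  proof (rule int_lower)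
    have "1/real m \<le> 1" using mpos by simp
    then show "{pi/2 - 1/real m..pi/2} \<subseteq> {-pi/2..pi/2}" using pi_ge_two by auto
  qed (use b0 wb in auto)
  moreover have "V^m * ((a-1)^2/V) \<le> (V - 2*a/real m)^m"
  proof -
    have "(2*a/V)/real m \<le> 2*a/V" by (rule div_le_self_real[OF Vpos(3) mpos])
    then have h1: "-1 \<le> -((2*a/V)/real m)" using Vpos(2) by linarith
    have B: "1 + of_nat m * (-((2*a/V)/real m)) \<le> (1 + -((2*a/V)/real m))^m"
      by (rule Bernoulli_inequality[OF h1])
    have e: "of_nat m * (-((2*a/V)/real m)) = -(2*a/V)"
      using mpos by simp
    have "(a-1)^2/V = 1 - 2*a/V" using Vpos(1) unfolding V_def
      by (simp add: field_simps power2_eq_square)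
    then have "(a-1)^2/V \<le> (1 - (2*a/V)/real m)^m" using B e by simp
    then have "V^m * ((a-1)^2/V) \<le> V^m * (1 - (2*a/V)/real m)^m"
      using Vpos(1) by (intro mult_left_mono) auto
    also have "\<dots> = (V * (1 - (2*a/V)/real m))^m" by (simp add: power_mult_distrib)
    also have "V * (1 - (2*a/V)/real m) = V - 2*a/real m" using Vpos(1) by (simp add: right_diff_distrib)
    finally show ?thesis .
  qed
  ultimately have "(1/real m) * (V^m * ((a-1)^2/V)) \<le> Ai a m"
    using mpos by (smt (verit) divide_nonneg_nonneg mult_left_mono)
  then show ?thesis unfolding V_def[symmetric] by (simp add: mult_ac)
qed

end




lemma ln_growth:
  fixes X :: "nat \<Rightarrow> real"
  assumes c: "c > 0" and D: "D > 0" and B: "B > 0"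
    and lo: "\<And>n. n \<ge> 1 \<Longrightarrow> c * B^n / n \<le> X n" and up: "\<And>n. X n \<le> D * B^n"
  shows "(\<lambda>n. ln (X n) / n) \<longlonglongrightarrow> ln B"
proof (rule tendsto_sandwich)
  show "eventually (\<lambda>n. ln B + (ln c - ln (real n)) / n \<le> ln (X n) / n) sequentially"
    using eventually_ge_at_top[of 1]
  proof eventually_elim
    case (elim n)
    then have n0: "real n > 0" by simp
    have p: "c * B^n / n > 0" using c B n0 by simp
    have "ln (c * B^n / n) \<le> ln (X n)" using lo[OF elim] p by simp
    moreover have "ln (c * B^n / n) = ln c + n * ln B - ln n"
      using c B n0 by (simp add: ln_mult ln_div ln_realpow)
    ultimately have "ln c + n * ln B - ln n \<le> ln (X n)" by simp
    then have "(ln c + n * ln B - ln n) / n \<le> ln (X n) / n" using n0 by (simp add: divide_right_mono)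
    moreover have "(ln c + n * ln B - ln n) / n = ln B + (ln c - ln (real n)) / n"
      using n0 by (simp add: field_simps)
    ultimately show ?case by simp
  qed
  show "eventually (\<lambda>n. ln (X n) / n \<le> ln B + ln D / n) sequentially"
    using eventually_ge_at_top[of 1]
  proof eventually_elim
    case (elim n)
    then have n0: "real n > 0" by simp
    have p: "c * B^n / n > 0" using c B n0 by simp
    have Xp: "X n > 0" using lo[OF elim] p by simp
    have "ln (X n) \<le> ln (D * B^n)" using up[of n] Xp by simp
    moreover have "ln (D * B^n) = ln D + n * ln B"
      using D B by (simp add: ln_mult ln_realpow)
    ultimately have "ln (X n) / n \<le> (ln D + n * ln B) / n" using n0 by (simp add: divide_right_mono)
    moreover have "(ln D + n * ln B) / n = ln B + ln D / n"
      using n0 by (simp add: field_simps)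
    ultimately show ?case by simp
  qed
  have "(\<lambda>n. ln c / real n - ln (real n) / real n) \<longlonglongrightarrow> 0 - 0"
    by (intro tendsto_diff lim_const_over_n lim_ln_over_n)
  then have "(\<lambda>n. (ln c - ln (real n)) / real n) \<longlonglongrightarrow> 0" by (simp add: diff_divide_distrib)
  then show "(\<lambda>n. ln B + (ln c - ln (real n)) / n) \<longlonglongrightarrow> ln B"
    using tendsto_add[OF tendsto_const, of _ 0 sequentially "ln B"] by simp
  have "(\<lambda>n. ln D / real n) \<longlonglongrightarrow> 0" by (rule lim_const_over_n)
  then show "(\<lambda>n. ln B + ln D / n) \<longlonglongrightarrow> ln B"
    using tendsto_add[OF tendsto_const, of _ 0 sequentially "ln B"] by simp
qed

context
  fixes a :: real
  assumes a1: "a > 1"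
begin

lemma ratio_lim: "(\<lambda>m. Mi a (Suc m) / Mi a m) \<longlonglongrightarrow> (a+1)^2"
proof (rule tendstoI)
  fix e :: real assume e: "e > 0"
  define W where "W = (a+1)^2"
  define e' where "e' = min e W"
  define q where "q = W - e'/2"
  have W0: "W > 0" unfolding W_def using a1 by simp
  have e'0: "e' > 0" "e' \<le> e" "e' \<le> W" unfolding e'_def using e W0 by auto
  have q0: "0 < q" "q < W" unfolding q_def using e'0 by auto
  have "(\<lambda>m. real m * (q/W)^m) \<longlonglongrightarrow> 0"
    using powser_times_n_limit_0[of "q/W"] q0 by simp
  then have "(\<lambda>m. (8*pi*q/3) * (real m * (q/W)^m)) \<longlonglongrightarrow> (8*pi*q/3) * 0"
    by (intro tendsto_mult tendsto_const)
  then have ev: "eventually (\<lambda>m. (8*pi*q/3) * (real m * (q/W)^m) < e'/2) sequentially"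
    by (rule order_tendstoD(2)) (use e'0 in simp)
  show "eventually (\<lambda>m. dist (Mi a (Suc m) / Mi a m) ((a+1)^2) < e) sequentially"
    using ev eventually_ge_at_top[of 1]
  proof eventually_elim
    case (elim m)
    have mpos: "real m \<ge> 1" using elim by simp
    have Mp: "Mi a m > 0" using Mi_pos a1 by blast
    have low: "Mi a m \<ge> (3/4) * W^m / m" unfolding W_def using Mi_lower[OF a1 elim(2)] .
    have lowp: "(3/4) * W^m / m > 0" using W0 mpos by simp
    have up: "Mi a (Suc m) / Mi a m \<le> W"
      using Mi_suc_le[OF a1, of m] Mp unfolding W_def by (simp add: divide_le_eq)
    have "Mi a (Suc m) \<ge> q * Mi a m - 2*pi*q^(Suc m)" using Mi_suc_ge[OF a1, of q m] q0 by simp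
    then have "Mi a (Suc m) / Mi a m \<ge> (q * Mi a m - 2*pi*q^(Suc m)) / Mi a m"
      using Mp by (intro divide_right_mono) auto
    also have "(q * Mi a m - 2*pi*q^(Suc m)) / Mi a m = q - 2*pi*q^(Suc m) / Mi a m"
      using Mp by (simp add: field_simps)
    finally have lo: "Mi a (Suc m) / Mi a m \<ge> q - 2*pi*q^(Suc m) / Mi a m" .
    have "2*pi*q^(Suc m) / Mi a m \<le> 2*pi*q^(Suc m) / ((3/4) * W^m / m)"
    proof (rule divide_left_mono[OF low])
      show "0 \<le> 2*pi*q^(Suc m)" using q0 by simp
      show "0 < Mi a m * ((3/4) * W^m / m)" using Mp lowp by (rule mult_pos_pos)
    qed
    also have "\<dots> = (8*pi*q/3) * (real m * (q/W)^m)"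
      using W0 mpos by (simp add: field_simps power_divide)
    finally have "2*pi*q^(Suc m) / Mi a m < e'/2" using elim(1) by linarith
    then have "Mi a (Suc m) / Mi a m > W - e'" using lo unfolding q_def by linarith
    then show ?case using up e'0 unfolding W_def[symmetric] dist_real_def by (simp add: abs_if)
  qed
qed

lemma ratio_shift: "(\<lambda>n. Mi a (n - j) / Mi a n) \<longlonglongrightarrow> 1/((a+1)^2)^j"
proof (induction j)
  case 0
  have "(\<lambda>n. Mi a (n - 0) / Mi a n) = (\<lambda>n. 1)" 
  proof -
    have "\<And>n. Mi a n \<noteq> 0" using Mi_pos[OF a1] by (metis less_irrefl)
    then show ?thesis by simp
  qed
  then show ?case by simp
next
  case (Suc j)
  define X where "X = (\<lambda>m. Mi a (Suc m) / Mi a m)"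
  have "(\<lambda>n. X (n - Suc j)) \<longlonglongrightarrow> (a+1)^2"
    unfolding X_def
    by (rule filterlim_compose[OF ratio_lim filterlim_minus_const_nat_at_top])
  then have "(\<lambda>n. (1 / X (n - Suc j)) * (Mi a (n - j) / Mi a n)) \<longlonglongrightarrow> (1/(a+1)^2) * (1/((a+1)^2)^j)"
    using a1 by (intro tendsto_mult[OF tendsto_divide[OF tendsto_const] Suc.IH]) auto
  moreover have "eventually (\<lambda>n. (1 / X (n - Suc j)) * (Mi a (n - j) / Mi a n) = Mi a (n - Suc j) / Mi a n) sequentially"
    using eventually_ge_at_top[of "Suc j"]
  proof eventually_elim
    case (elim n)
    then have "Suc (n - Suc j) = n - j" by simp
    then show ?case unfolding X_def using Mi_pos[OF a1, of "n - j"] Mi_pos[OF a1, of "n - Suc j"] Mi_pos[OF a1, of n]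
      by (simp add: field_simps)
  qed
  ultimately show ?case by (simp add: tendsto_cong)
qed

lemma P_ratio: "(\<lambda>n. real (P n j) / real n ^ j) \<longlonglongrightarrow> 1"
proof -
  have "(\<lambda>n. \<Prod>i<j. (1 - real i / real n)) \<longlonglongrightarrow> (\<Prod>i<j. (1 - 0))"
    by (intro tendsto_prod tendsto_diff tendsto_const lim_const_over_n)
  moreover have "eventually (\<lambda>n. (\<Prod>i<j. (1 - real i / real n)) = real (P n j) / real n ^ j) sequentially"
    using eventually_ge_at_top[of "Suc j"]
  proof eventually_elim
    case (elim n)
    then have n0: "real n > 0" by simp
    have "real (P n j) = (\<Prod>i<j. real n - real i)"
      unfolding P_def of_nat_prod using elim by (intro prod.cong) (auto simp: of_nat_diff)
    moreover have "real n ^ j = (\<Prod>i<j. real n)" by simp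
    ultimately have "real (P n j) / real n ^ j = (\<Prod>i<j. (real n - real i) / real n)"
      by (simp add: prod_dividef)
    also have "\<dots> = (\<Prod>i<j. (1 - real i / real n))"
      using n0 by (intro prod.cong) (auto simp: field_simps)
    finally show ?case by simp
  qed
  ultimately show ?thesis by (simp add: tendsto_cong)
qed

lemma T_lim: "(\<lambda>n. (2*pi*S a k n / Mi a n) / real n^(2*k)) \<longlonglongrightarrow> 1/((a+1)^2)^k"
proof -
  define W where "W = (a+1)^2"
  have W0: "W > 0" unfolding W_def using a1 by simp
  have "(\<lambda>n. \<Sum>j\<le>k. (real (P n j) / real n ^ j)^2 * (1/real n)^(2*(k-j)) * (Mi a (n-j)/Mi a n))
        \<longlonglongrightarrow> (\<Sum>j\<le>k. 1^2 * 0^(2*(k-j)) * (1/W^j))"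
    unfolding W_def
    by (intro tendsto_sum tendsto_mult tendsto_power P_ratio ratio_shift lim_const_over_n)
  moreover have "(\<Sum>j\<le>k. 1^2 * 0^(2*(k-j)) * (1/W^j)) = 1/W^k"
  proof -
    have "(\<Sum>j\<le>k. (1::real)^2 * 0^(2*(k-j)) * (1/W^j)) = (\<Sum>j<Suc k. (1::real)^2 * 0^(2*(k-j)) * (1/W^j))"
      by (simp add: lessThan_Suc_atMost)
    also have "\<dots> = (\<Sum>j<k. (1::real)^2 * 0^(2*(k-j)) * (1/W^j)) + 1/W^k"
      by simp
    also have "(\<Sum>j<k. (1::real)^2 * 0^(2*(k-j)) * (1/W^j)) = 0"
      by (intro sum.neutral) auto
    finally show ?thesis by simp
  qed
  moreover have "eventually (\<lambda>n. (\<Sum>j\<le>k. (real (P n j) / real n ^ j)^2 * (1/real n)^(2*(k-j)) * (Mi a (n-j)/Mi a n))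
        = (2*pi*S a k n / Mi a n) / real n^(2*k)) sequentially"
    using eventually_ge_at_top[of 1]
  proof eventually_elim
    case (elim n)
    then have n0: "real n > 0" by simp
    have Mp: "Mi a n > 0" using Mi_pos[OF a1] .
    have "(2*pi*S a k n / Mi a n) / real n^(2*k) = (\<Sum>j\<le>k. real (P n j) ^ 2 * Mi a (n - j) / Mi a n / real n^(2*k))"
      unfolding S_def by (simp add: sum_distrib_left sum_divide_distrib)
    also have "\<dots> = (\<Sum>j\<le>k. (real (P n j) / real n ^ j)^2 * (1/real n)^(2*(k-j)) * (Mi a (n-j)/Mi a n))"
    proof (intro sum.cong refl)
      fix j assume "j \<in> {..k}"
      then have "2*k = j*2 + 2*(k-j)" by simp
      then have e: "real n ^ (2*k) = (real n ^ j)^2 * real n ^ (2*(k-j))"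
        by (simp only: power_add power_mult)
      show "real (P n j) ^ 2 * Mi a (n - j) / Mi a n / real n^(2*k) =
            (real (P n j) / real n ^ j)^2 * (1/real n)^(2*(k-j)) * (Mi a (n-j)/Mi a n)"
        unfolding e using n0 Mp by (simp add: field_simps power_divide)
    qed
    finally show ?case by simp
  qed
  ultimately show ?thesis unfolding W_def by (simp add: tendsto_cong)
qed

lemma lnMi_lim: "(\<lambda>n. ln (Mi a n) / n) \<longlonglongrightarrow> ln ((a+1)^2)"
  using a1 by (intro ln_growth[where c="3/4" and D="2*pi"] Mi_lower Mi_le) auto

lemma lnAi_lim: "(\<lambda>n. ln (Ai a n) / n) \<longlonglongrightarrow> ln (1+a^2)"
  using a1 by (intro ln_growth[where c="(a-1)^2/(1+a^2)" and D="pi"] Ai_lower Ai_le)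
    (auto simp: add_pos_nonneg)

lemma circ_lim: "(\<lambda>n. real n ^ k * circ_norm (f_norm k a n)) \<longlonglongrightarrow> (a+1)^k"
proof -
  define T where "T = (\<lambda>n. (2*pi*S a k n / Mi a n) / real n^(2*k))"
  have "(\<lambda>n. sqrt (1 / T n)) \<longlonglongrightarrow> sqrt (1 / (1/((a+1)^2)^k))"
    unfolding T_def using a1 by (intro tendsto_real_sqrt tendsto_divide tendsto_const T_lim) auto
  moreover have "sqrt (1 / (1/((a+1)^2)^k)) = (a+1)^k"
  proof -
    have "((a+1)^2)^k = ((a+1)^k)^2" by (metis power_mult mult.commute)
    then show ?thesis using a1 by simp
  qed
  moreover have "eventually (\<lambda>n. sqrt (1 / T n) = real n ^ k * circ_norm (f_norm k a n)) sequentially"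
    using eventually_ge_at_top[of 1]
  proof eventually_elim
    case (elim n)
    then have n0: "real n > 0" by simp
    have Mp: "Mi a n > 0" using Mi_pos[OF a1] .
    have Sp: "S a k n > 0" using S_pos[OF a1] .
    have "1 / T n = (real n ^ k)^2 * (Mi a n / (2*pi) / S a k n)"
    proof -
      have "real n^(2*k) = (real n ^ k)^2" by (metis power_mult mult.commute)
      then show ?thesis unfolding T_def using n0 Mp Sp by (simp add: field_simps)
    qed
    then have "sqrt (1 / T n) = sqrt ((real n ^ k)^2) * sqrt (Mi a n / (2*pi) / S a k n)"
      by (simp only: real_sqrt_mult)
    also have "\<dots> = real n ^ k * circ_norm (f_norm k a n)"
      using circ_f[OF a1] by simp
    finally show ?case .
  qed
  ultimately show ?thesis by (simp add: tendsto_cong)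
qed

definition cc :: real where "cc = (ln ((a+1)^2) - ln (1+a^2)) / 2"

lemma cc_eq: "cc = (ln ((a+1)^2) - ln (1+a^2)) / 2" by (rule cc_def)

lemma cc_pos: "cc > 0"
proof -
  have "1 + a^2 < (a+1)^2" using a1 by (simp add: power2_eq_square algebra_simps)
  moreover have "0 < 1 + a^2" by (simp add: add_pos_nonneg)
  ultimately have "ln (1+a^2) < ln ((a+1)^2)" by (subst ln_less_cancel_iff) auto
  then show ?thesis unfolding cc_def by simp
qed

lemma L_lim: "(\<lambda>n. ln (1 / arc_norm (f_norm k a n)) / n) \<longlonglongrightarrow> cc"
proof -
  define T where "T = (\<lambda>n. (2*pi*S a k n / Mi a n) / real n^(2*k))"
  define W where "W = (a+1)^2"
  have W0: "W > 0" unfolding W_def using a1 by simp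
  have "(\<lambda>n. ln (T n)) \<longlonglongrightarrow> ln (1/W^k)"
    unfolding T_def W_def using a1 by (intro tendsto_ln T_lim) auto
  then have lT: "(\<lambda>n. ln (T n) * (1 / real n)) \<longlonglongrightarrow> ln (1/W^k) * 0"
    by (intro tendsto_mult) (auto intro: lim_const_over_n)
  have lim1: "(\<lambda>n. (1/2) * (ln (T n) * (1 / real n) + 2*real k*(ln (real n)/real n) + ln (Mi a n)/n - ln (2*pi)/n - ln (Ai a n)/n + ln pi/n))
     \<longlonglongrightarrow> (1/2) * (ln (1/W^k) * 0 + 2*real k*0 + ln W - 0 - ln (1+a^2) + 0)"
    by (intro lT lim_ln_over_n tendsto_mult tendsto_add tendsto_diff tendsto_const lnMi_lim[folded W_def] lnAi_lim lim_const_over_n)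
  have eq: "(1/2) * (ln (1/W^k) * 0 + 2*real k*0 + ln W - 0 - ln (1+a^2) + 0) = cc"
    unfolding cc_def W_def by simp
  have ev: "eventually (\<lambda>n. (1/2) * (ln (T n) * (1 / real n) + 2*real k*(ln (real n)/real n) + ln (Mi a n)/n - ln (2*pi)/n - ln (Ai a n)/n + ln pi/n)
     = ln (1 / arc_norm (f_norm k a n)) / n) sequentially"
    using eventually_ge_at_top[of 1]
  proof eventually_elim
    case (elim n)
    then have n0: "real n > 0" by simp
    have Mp: "Mi a n > 0" using Mi_pos[OF a1] .
    have Ap: "Ai a n > 0" using Ai_pos[OF a1] .
    have Sp: "S a k n > 0" using S_pos[OF a1] .
    have Tp: "T n > 0" unfolding T_def using n0 Mp Sp by simp
    have np: "real n ^ (2*k) > 0" using n0 by simp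
    have xeq: "Ai a n / pi / S a k n = (Ai a n * (2*pi)) / (pi * (T n * (real n^(2*k) * Mi a n)))"
      unfolding T_def using n0 Mp Sp by (simp add: field_simps)
    have "ln (Ai a n / pi / S a k n) = ln (Ai a n) + ln (2*pi) - (ln pi + (ln (T n) + (2*real k * ln (real n) + ln (Mi a n))))"
      unfolding xeq using Ap Tp Mp np n0
      by (simp add: ln_mult ln_div ln_realpow del: of_nat_mult)
    moreover have "ln (1 / arc_norm (f_norm k a n)) = - ln (Ai a n / pi / S a k n) / 2"
    proof -
      have xp: "Ai a n / pi / S a k n > 0" using Ap Sp by simp
      have "ln (1 / arc_norm (f_norm k a n)) = - ln (sqrt (Ai a n / pi / S a k n))"
        unfolding arc_f[OF a1] using xp Ap Sp by (simp add: ln_div)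
      also have "\<dots> = - ln (Ai a n / pi / S a k n) / 2" using xp by (simp add: ln_sqrt)
      finally show ?thesis .
    qed
    ultimately have LL: "ln (1 / arc_norm (f_norm k a n)) = (1/2)*(ln (T n) + 2*real k*ln (real n) + ln (Mi a n) - ln (2*pi) - ln (Ai a n) + ln pi)"
      by (simp add: field_simps)
    have "(1/2) * (ln (T n) * (1 / real n) + 2*real k*(ln (real n)/real n) + ln (Mi a n)/n - ln (2*pi)/n - ln (Ai a n)/n + ln pi/n)
      = (1/2)*(ln (T n) + 2*real k*ln (real n) + ln (Mi a n) - ln (2*pi) - ln (Ai a n) + ln pi) / n"
      using n0 by (simp add: add_divide_distrib diff_divide_distrib)
    then show ?case unfolding LL .
  qed
  show ?thesis using Lim_transform_eventually[OF lim1 ev] unfolding eq .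
qed

lemma beta_lim: "beta_seq k a \<longlonglongrightarrow> ((a+1)*cc)^k"
proof -
  have lim1: "(\<lambda>n. (real n ^ k * circ_norm (f_norm k a n)) * (ln (1 / arc_norm (f_norm k a n)) / n)^k)
     \<longlonglongrightarrow> (a+1)^k * cc^k"
    by (intro tendsto_mult tendsto_power circ_lim L_lim)
  have ev: "eventually (\<lambda>n. (real n ^ k * circ_norm (f_norm k a n)) * (ln (1 / arc_norm (f_norm k a n)) / n)^k
     = beta_seq k a n) sequentially"
    using eventually_ge_at_top[of 1]
  proof eventually_elim
    case (elim n)
    then have n0: "real n > 0" by simp
    show ?case unfolding beta_seq_def using n0 by (simp add: power_divide)
  qed
  show ?thesis using Lim_transform_eventually[OF lim1 ev] by (simp add: power_mult_distrib)
qed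

lemma arc_lim: "(\<lambda>n. arc_norm (f_norm k a n)) \<longlonglongrightarrow> 0"
proof -
  define L where "L = (\<lambda>n. ln (1 / arc_norm (f_norm k a n)))"
  have fl: "filterlim (\<lambda>n. L n / real n * real n) at_top sequentially"
    unfolding L_def
    by (rule filterlim_tendsto_pos_mult_at_top[OF L_lim cc_pos filterlim_real_sequentially])
  have ev: "eventually (\<lambda>n. L n / real n * real n = L n) sequentially"
    using eventually_ge_at_top[of 1] by eventually_elim simp
  have Lt: "filterlim L at_top sequentially"
    using filterlim_cong[OF refl refl ev] fl by simp
  have "(\<lambda>n. inverse (exp (L n))) \<longlonglongrightarrow> 0"
    by (rule tendsto_inverse_0_at_top[OF filterlim_compose[OF exp_at_top Lt]])
  moreover have "inverse (exp (L n)) = arc_norm (f_norm k a n)" for n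
  proof -
    have Ap: "Ai a n > 0" using Ai_pos[OF a1] .
    have Sp: "S a k n > 0" using S_pos[OF a1] .
    have "arc_norm (f_norm k a n) > 0" unfolding arc_f[OF a1] using Ap Sp by simp
    then show ?thesis unfolding L_def by simp
  qed
  ultimately show ?thesis by simp
qed

end

lemma inv_sandwich:
  fixes g :: "real \<Rightarrow> real"
  assumes "\<And>x. x \<ge> 1 \<Longrightarrow> 0 \<le> g x \<and> g x \<le> c / x"
  shows "(g \<longlongrightarrow> 0) at_top"
proof (rule tendsto_sandwich)
  show "eventually (\<lambda>x. (\<lambda>x. 0) x \<le> g x) at_top"
    using eventually_ge_at_top[of "1::real"] by eventually_elim (use assms in auto)
  show "eventually (\<lambda>x. g x \<le> c / x) at_top"
    using eventually_ge_at_top[of "1::real"] by eventually_elim (use assms in auto)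
  show "((\<lambda>x. 0) \<longlongrightarrow> 0) at_top" by simp
  show "((\<lambda>x. c / x) \<longlongrightarrow> (0::real)) at_top"
    by (intro tendsto_divide_0[OF tendsto_const] filterlim_at_top_imp_at_infinity filterlim_ident)
qed

lemma final_lim: "((\<lambda>a::real. (a+1)*((ln ((a+1)^2) - ln (1+a^2))/2)) \<longlongrightarrow> 1) at_top"
proof -
  define g where "g = (\<lambda>a::real. 2*a/(1+a^2))"
  define h where "h = (\<lambda>a::real. (a-1)/(1+a^2))"
  have d: "1 + a^2 > 0" for a :: real by (simp add: add_pos_nonneg)
  have g0: "(g \<longlongrightarrow> 0) at_top"
  proof (rule inv_sandwich[of _ 2])
    fix x :: real assume x: "x \<ge> 1"
    have "2*x*x \<le> 2*(1+x^2)" by (simp add: power2_eq_square)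
    then show "0 \<le> g x \<and> g x \<le> 2 / x" unfolding g_def using x d[of x]
      by (simp add: divide_le_eq field_simps)
  qed
  have h0: "(h \<longlongrightarrow> 0) at_top"
  proof (rule inv_sandwich[of _ 1])
    fix x :: real assume x: "x \<ge> 1"
    have "(x-1)*x \<le> 1+x^2" using x by (simp add: power2_eq_square algebra_simps)
    moreover have "0 < 1 + x" using x by simp
    ultimately show "0 \<le> h x \<and> h x \<le> 1 / x" unfolding h_def using x d[of x]
      by (simp add: divide_le_eq field_simps)
  qed
  have gat: "filterlim g (at 0) at_top"
    unfolding filterlim_at
  proof
    show "eventually (\<lambda>x. g x \<in> UNIV \<and> g x \<noteq> 0) at_top"
      using eventually_gt_at_top[of "0::real"]
    proof eventually_elim
      case (elim x)
      have "1 + x^2 \<noteq> 0" using d[of x] by linarith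
      then show ?case using elim unfolding g_def by simp
    qed
  qed (rule g0)
  have "((\<lambda>a. ln (1 + g a) / g a) \<longlongrightarrow> 1) at_top"
    by (rule filterlim_compose[OF lim_ln_1_plus_x_over_x_at_0 gat])
  then have lim: "((\<lambda>a. (1 + h a) * (ln (1 + g a) / g a)) \<longlongrightarrow> (1 + 0) * 1) at_top"
    by (intro tendsto_mult tendsto_add tendsto_const h0)
  have "eventually (\<lambda>a. (1 + h a) * (ln (1 + g a) / g a) = (a+1)*((ln ((a+1)^2) - ln (1+a^2))/2)) at_top"
    using eventually_gt_at_top[of "1::real"]
  proof eventually_elim
    case (elim a)
    have "(a+1)^2 = (1+a^2) * (1 + g a)" unfolding g_def using d[of a]
      by (simp add: field_simps power2_eq_square)
    then have l: "ln ((a+1)^2) - ln (1+a^2) = ln (1 + g a)"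
    proof -
      have gp: "g a > 0" unfolding g_def using elim d[of a] by simp
      have "1 + g a \<noteq> 0" "1 + a^2 \<noteq> 0" using gp d[of a] by linarith+
      then show ?thesis unfolding \<open>(a+1)^2 = (1+a^2) * (1 + g a)\<close> by (simp add: ln_mult)
    qed
    have "(1 + h a) * (ln (1 + g a) / g a) = ((1 + h a) / g a) * ln (1 + g a)" by simp
    also have "(1 + h a) / g a = (a+1)/2"
    proof -
      have e1: "(1 + h a) * (1 + a^2) = a * (a+1)" unfolding h_def using d[of a]
        by (simp add: field_simps power2_eq_square)
      have "(1 + h a) / g a = (1 + h a) * (1 + a^2) / (2*a)" unfolding g_def by simp
      also have "\<dots> = a * (a+1) / (2*a)" unfolding e1 ..
      also have "\<dots> = (a+1)/2" using elim by simp
      finally show ?thesis .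
    qed
    finally show ?case unfolding l by simp
  qed
  then show ?thesis using Lim_transform_eventually[OF lim] by simp
qed


theorem proposition1:
  fixes k :: nat
  assumes "k \<ge> 1"
  shows "(\<forall>a::real. a > 1 \<longrightarrow>
            (\<lambda>n. arc_norm (f_norm k a n)) \<longlonglongrightarrow> 0 \<and>
            convergent (beta_seq k a) \<and> lim (beta_seq k a) > 0)
         \<and> ((\<lambda>a. lim (beta_seq k a)) \<longlongrightarrow> 1) at_top"
proof
  show "\<forall>a::real. a > 1 \<longrightarrow>
            (\<lambda>n. arc_norm (f_norm k a n)) \<longlonglongrightarrow> 0 \<and>
            convergent (beta_seq k a) \<and> lim (beta_seq k a) > 0"
  proof (intro allI impI conjI)
    fix a :: real assume a: "a > 1"
    show "(\<lambda>n. arc_norm (f_norm k a n)) \<longlonglongrightarrow> 0" by (rule arc_lim[OF a])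
    show "convergent (beta_seq k a)" using beta_lim[OF a] by (rule convergentI)
    have "lim (beta_seq k a) = ((a+1)*cc a)^k" using beta_lim[OF a] by (rule limI)
    moreover have "(a+1)*cc a > 0" using cc_pos[OF a] a by simp
    ultimately show "lim (beta_seq k a) > 0" by simp
  qed
  have "((\<lambda>a::real. ((a+1)*((ln ((a+1)^2) - ln (1+a^2))/2))^k) \<longlongrightarrow> 1^k) at_top"
    by (intro tendsto_power final_lim)
  moreover have "eventually (\<lambda>a::real. ((a+1)*((ln ((a+1)^2) - ln (1+a^2))/2))^k = lim (beta_seq k a)) at_top"
    using eventually_gt_at_top[of "1::real"]
  proof eventually_elim
    case (elim a)
    have "lim (beta_seq k a) = ((a+1)*cc a)^k" using beta_lim[OF elim] by (rule limI)
    then show ?case using cc_eq[OF elim] by simp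
  qed
  ultimately show "((\<lambda>a. lim (beta_seq k a)) \<longlongrightarrow> 1) at_top"
    using Lim_transform_eventually by fastforce
qed


end
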